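(* Let $m,n$ be positive even integers, and let $P,Q\in\mathbb{C}[z_1,\dots,z_d]$ be nonzero polynomials of the form \[ P(z)=\sum_{\alpha\in(2\mathbb{N})^d,\ |\alpha|\le m}c_\alpha z^\alpha,\qquad Q(z)=\sum_{\alpha\in(2\mathbb{N})^d,\ |\alpha|\le n}d_\alpha z^\alpha, \] where $2\mathbb{N}=\{0,2,4,\dots\}$ (so every variable appears only to even powers). Then \[ \Bigl(\tfrac{m+n}{2}\Bigr)!\;\|P\,Q\|_a\ge\|P\|_a\,\|Q\|_a . \]
   Context: For multi-indices $\alpha\in\mathbb{N}^d$ write $z^\alpha=z_1^{\alpha_1}\cdots z_d^{\alpha_d}$, $\alpha!=\alpha_1!\cdots\alpha_d!$, $|\alpha|=\sum\alpha_i$. The apolar inner product on $\mathbb{C}[z_1,\dots,z_d]$ is $\langle \sum c_\alpha z^\alpha,\sum d_\alpha z^\alpha\rangle_a=\sum_\alpha\alpha!\,c_\alpha\overline{d_\alpha}$, with norm $\|P\|_a=\sqrt{\langle P,P\rangle_a}$. *)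

theory Defs
  imports "HOL-Analysis.Analysis" "HOL-Library.Poly_Mapping"
begin

(* Multi-indices alpha in N^d: finitely supported maps nat =>0 nat (variable i <-> z_(i+1)).
   Polynomials: finitely supported coefficient maps (nat =>0 nat) =>0 complex;
   multiplication is the Poly_Mapping convolution, i.e. ordinary polynomial product. *)
type_synonym mpoly_c = "(nat \<Rightarrow>\<^sub>0 nat) \<Rightarrow>\<^sub>0 complex"

definition mi_fact :: "(nat \<Rightarrow>\<^sub>0 nat) \<Rightarrow> nat" where
  "mi_fact \<alpha> = (\<Prod>i\<in>Poly_Mapping.keys \<alpha>. fact (Poly_Mapping.lookup \<alpha> i))"

definition mi_deg :: "(nat \<Rightarrow>\<^sub>0 nat) \<Rightarrow> nat" where
  "mi_deg \<alpha> = (\<Sum>i\<in>Poly_Mapping.keys \<alpha>. Poly_Mapping.lookup \<alpha> i)"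

definition apolar_inner :: "mpoly_c \<Rightarrow> mpoly_c \<Rightarrow> complex" where
  "apolar_inner P Q = (\<Sum>\<alpha>\<in>Poly_Mapping.keys P \<union> Poly_Mapping.keys Q.
      of_nat (mi_fact \<alpha>) * Poly_Mapping.lookup P \<alpha> * cnj (Poly_Mapping.lookup Q \<alpha>))"

definition apolar_norm :: "mpoly_c \<Rightarrow> real" where
  "apolar_norm P = sqrt (Re (apolar_inner P P))"

definition even_form :: "nat \<Rightarrow> nat \<Rightarrow> mpoly_c \<Rightarrow> bool" where
  "even_form d m P \<longleftrightarrow> (\<forall>\<alpha>\<in>Poly_Mapping.keys P. Poly_Mapping.keys \<alpha> \<subseteq> {..<d} \<and> mi_deg \<alpha> \<le> m
      \<and> (\<forall>i. even (Poly_Mapping.lookup \<alpha> i)))"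

end

theory Submission
  imports Defs
begin


definition vbox :: "nat \<Rightarrow> nat \<Rightarrow> (nat \<Rightarrow> nat) set" where
  "vbox D M = {x. (\<forall>i<D. x i \<le> M) \<and> (\<forall>i. D \<le> i \<longrightarrow> x i = 0)}"

definition vf :: "nat \<Rightarrow> (nat \<Rightarrow> nat) \<Rightarrow> real" where
  "vf D x = (\<Prod>i<D. fact (x i))"

lemma vbox_Suc: "vbox (Suc D) M = (\<lambda>(x,a). x(D:=a)) ` (vbox D M \<times> {..M})"
proof (intro set_eqI iffI)
  fix y assume y: "y \<in> vbox (Suc D) M"
  hence "y = (\<lambda>(x,a). x(D:=a)) (y(D:=0), y D)" by auto
  moreover have "(y(D:=0), y D) \<in> vbox D M \<times> {..M}" using y
    by (auto simp: vbox_def)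
  ultimately show "y \<in> (\<lambda>(x,a). x(D:=a)) ` (vbox D M \<times> {..M})" by blast
next
  fix y assume "y \<in> (\<lambda>(x,a). x(D:=a)) ` (vbox D M \<times> {..M})"
  then show "y \<in> vbox (Suc D) M" by (auto simp: vbox_def less_Suc_eq)
qed

lemma vbox_inj: "inj_on (\<lambda>(x,a). x(D:=a)) (vbox D M \<times> {..M})"
proof (rule inj_onI, clarsimp)
  fix x a x' a' assume "x \<in> vbox D M" "x' \<in> vbox D M" and e: "x(D := a) = x'(D := a')"
  then have "a = a'" by (metis fun_upd_same)
  moreover have "x = x'"
  proof
    fix i show "x i = x' i"
    proof (cases "i = D")
      case True then show ?thesis using \<open>x \<in> vbox D M\<close> \<open>x' \<in> vbox D M\<close> by (simp add: vbox_def)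
    next
      case False then show ?thesis using e by (metis fun_upd_other)
    qed
  qed
  ultimately show "x = x' \<and> a = a'" by simp
qed

lemma vbox_0: "vbox 0 M = {\<lambda>_. 0}"
  by (auto simp: vbox_def)

lemma finite_vbox [simp]: "finite (vbox D M)"
proof (induction D)
  case 0 then show ?case by (simp add: vbox_0)
next
  case (Suc D) then show ?case by (simp add: vbox_Suc)
qed

lemma sum_prod_vbox:
  fixes \<phi> :: "nat \<Rightarrow> nat \<Rightarrow> 'a::comm_semiring_1"
  shows "(\<Sum>x\<in>vbox D M. \<Prod>i<D. \<phi> i (x i)) = (\<Prod>i<D. \<Sum>a\<le>M. \<phi> i a)"
proof (induction D)
  case 0 then show ?case by (simp add: vbox_0)
next
  case (Suc D)
  have "(\<Sum>x\<in>vbox (Suc D) M. \<Prod>i<Suc D. \<phi> i (x i))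
      = (\<Sum>p\<in>vbox D M \<times> {..M}. \<Prod>i<Suc D. \<phi> i (((\<lambda>(x,a). x(D:=a)) p) i))"
    unfolding vbox_Suc by (subst sum.reindex[OF vbox_inj]) (simp add: comp_def)
  also have "\<dots> = (\<Sum>x\<in>vbox D M. \<Sum>a\<le>M. (\<Prod>i<D. \<phi> i (x i)) * \<phi> D a)"
    unfolding sum.cartesian_product
    by (intro sum.cong refl) (auto simp: lessThan_Suc mult.commute intro!: prod.cong)
  also have "\<dots> = (\<Sum>x\<in>vbox D M. \<Prod>i<D. \<phi> i (x i)) * (\<Sum>a\<le>M. \<phi> D a)"
    by (simp add: sum_product)
  finally show ?case using Suc by (simp add: lessThan_Suc mult.commute)
qed



lemma vand_term:
  assumes e: "x + y = x' + (y'::nat)" and ax: "a \<le> x"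
  shows "(if a \<le> x' \<and> x' \<le> a + y then fact x * fact y * fact x' * fact y' /
            (fact a * fact (a + y - x') * fact (x' - a) * fact (x - a)) else (0::real))
       = fact x * fact y * real ((x' choose a) * (y' choose (x - a)))"
proof (cases "a \<le> x' \<and> x' \<le> a + y")
  case True
  have h1: "real (x' choose a) = fact x' / (fact a * fact (x' - a))"
    using True binomial_fact by blast
  have le: "x - a \<le> y'" using True e ax by linarith
  have eq: "y' - (x - a) = a + y - x'" using True e ax by linarith
  have h2: "real (y' choose (x - a)) = fact y' / (fact (x-a) * fact (a + y - x'))"
    using binomial_fact[OF le] eq by simp
  show ?thesis using True by (simp add: h1 h2 field_simps)
next
  case False
  then have "(x' choose a) * (y' choose (x - a)) = 0"
  proof (cases "a \<le> x'")
    case True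
    with False have "x' > a + y" by simp
    then have "x - a > y'" using e ax by linarith
    then show ?thesis by simp
  next
    case False then show ?thesis by simp
  qed
  then have z: "real ((x' choose a) * (y' choose (x - a))) = 0" by (simp only: of_nat_0)
  show ?thesis by (simp only: if_not_P[OF False] z mult_zero_right)
qed

lemma vand1:
  assumes e: "x + y = x' + (y'::nat)" and xM: "x \<le> M"
  shows "(\<Sum>a\<le>M. if a \<le> x \<and> a \<le> x' \<and> x' \<le> a + y then fact x * fact y * fact x' * fact y' /
            (fact a * fact (a + y - x') * fact (x' - a) * fact (x - a)) else (0::real))
       = fact (x + y)"
proof -
  have "(\<Sum>a\<le>M. if a \<le> x \<and> a \<le> x' \<and> x' \<le> a + y then fact x * fact y * fact x' * fact y' /
            (fact a * fact (a + y - x') * fact (x' - a) * fact (x - a)) else (0::real))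
     = (\<Sum>a\<le>x. if a \<le> x' \<and> x' \<le> a + y then fact x * fact y * fact x' * fact y' /
            (fact a * fact (a + y - x') * fact (x' - a) * fact (x - a)) else (0::real))"
    using xM by (intro sum.mono_neutral_cong_right) auto
  also have "\<dots> = (\<Sum>a\<le>x. fact x * fact y * real ((x' choose a) * (y' choose (x - a))))"
    by (intro sum.cong refl vand_term[OF e]) simp
  also have "\<dots> = fact x * fact y * real (\<Sum>a\<le>x. (x' choose a) * (y' choose (x - a)))"
    by (simp add: sum_distrib_left)
  also have "\<dots> = fact x * fact y * real ((x + y) choose x)"
    by (simp only: vandermonde e)
  also have "\<dots> = fact (x + y)"
    using binomial_fact[of x "x+y", where 'a=real] by (simp add: field_simps)
  finally show ?thesis .
qed



definition vadd :: "(nat \<Rightarrow> nat) \<Rightarrow> (nat \<Rightarrow> nat) \<Rightarrow> nat \<Rightarrow> nat" where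
  "vadd x y = (\<lambda>i. x i + y i)"

lemma vadd_apply [simp]: "vadd x y i = x i + y i" by (simp add: vadd_def)

definition kap :: "(nat \<Rightarrow> nat) \<times> (nat \<Rightarrow> nat) \<times> (nat \<Rightarrow> nat) \<times> (nat \<Rightarrow> nat)
   \<Rightarrow> (nat \<Rightarrow> nat) \<times> (nat \<Rightarrow> nat) \<times> (nat \<Rightarrow> nat) \<times> (nat \<Rightarrow> nat)" where
  "kap t = (case t of (\<alpha>, c, r, r') \<Rightarrow> (vadd \<alpha> r', vadd c r, vadd \<alpha> r, vadd c r'))"

definition Wt :: "nat \<Rightarrow> (nat \<Rightarrow> nat) \<times> (nat \<Rightarrow> nat) \<times> (nat \<Rightarrow> nat) \<times> (nat \<Rightarrow> nat) \<Rightarrow> real" where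
  "Wt D t = (case t of (\<alpha>, c, r, r') \<Rightarrow>
     vf D (vadd \<alpha> r') * vf D (vadd c r) * vf D (vadd \<alpha> r) * vf D (vadd c r') /
     (vf D \<alpha> * vf D c * vf D r * vf D r'))"

abbreviation "B4 D M \<equiv> vbox D M \<times> vbox D M \<times> vbox D M \<times> vbox D M"

lemma fiber_empty:
  assumes "vadd x y \<noteq> vadd x' y'"
  shows "{t \<in> B4 D M. kap t = (x, y, x', y')} = {}"
proof (rule ccontr)
  assume "{t \<in> B4 D M. kap t = (x, y, x', y')} \<noteq> {}"
  then obtain \<alpha> c r r' where "kap (\<alpha>, c, r, r') = (x, y, x', y')" by auto
  then have "x = vadd \<alpha> r'" "y = vadd c r" "x' = vadd \<alpha> r" "y' = vadd c r'"
    by (auto simp: kap_def)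
  then have "vadd x y = vadd x' y'" by (auto simp: fun_eq_iff)
  with assms show False by simp
qed

lemma fiber_eq:
  fixes D M :: nat and x y x' y' :: "nat \<Rightarrow> nat"
  assumes e: "vadd x y = vadd x' y'"
  defines "A \<equiv> {\<alpha> \<in> vbox D M. \<forall>i<D. \<alpha> i \<le> x i \<and> \<alpha> i \<le> x' i \<and> x' i \<le> \<alpha> i + y i}"
  defines "\<phi> \<equiv> (\<lambda>\<alpha>. (\<alpha>, (\<lambda>i. \<alpha> i + y i - x' i), (\<lambda>i. x' i - \<alpha> i), (\<lambda>i. x i - \<alpha> i)))"
  assumes xB: "x \<in> vbox D M" "y \<in> vbox D M" "x' \<in> vbox D M" "y' \<in> vbox D M"
  shows "{t \<in> B4 D M. kap t = (x, y, x', y')} = \<phi> ` A" and "inj_on \<phi> A"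
proof -
  have ei: "x i + y i = x' i + y' i" for i using e by (metis vadd_apply)
  show "inj_on \<phi> A" unfolding \<phi>_def by (rule inj_onI) simp
  show "{t \<in> B4 D M. kap t = (x, y, x', y')} = \<phi> ` A"
  proof (intro set_eqI iffI)
    fix t assume t: "t \<in> {t \<in> B4 D M. kap t = (x, y, x', y')}"
    obtain \<alpha> c r r' where tt: "t = (\<alpha>, c, r, r')" by (cases t) auto
    from t tt have B: "\<alpha> \<in> vbox D M" "c \<in> vbox D M" "r \<in> vbox D M" "r' \<in> vbox D M" by auto
    from t tt have k: "x = vadd \<alpha> r'" "y = vadd c r" "x' = vadd \<alpha> r" "y' = vadd c r'"
      by (auto simp: kap_def)
    have "\<alpha> \<in> A" using B(1) unfolding A_def k by auto
    moreover have "t = \<phi> \<alpha>" unfolding tt \<phi>_def k by (auto simp: fun_eq_iff)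
    ultimately show "t \<in> \<phi> ` A" by blast
  next
    fix t assume "t \<in> \<phi> ` A"
    then obtain \<alpha> where a: "\<alpha> \<in> A" and tt: "t = \<phi> \<alpha>" by blast
    from a have aB: "\<alpha> \<in> vbox D M" and c: "\<And>i. i < D \<Longrightarrow> \<alpha> i \<le> x i \<and> \<alpha> i \<le> x' i \<and> x' i \<le> \<alpha> i + y i"
      unfolding A_def by auto
    have z: "\<And>i. D \<le> i \<Longrightarrow> x i = 0 \<and> y i = 0 \<and> x' i = 0 \<and> y' i = 0 \<and> \<alpha> i = 0"
      using xB aB by (auto simp: vbox_def)
    have Ms: "\<And>i. i < D \<Longrightarrow> x i \<le> M \<and> y i \<le> M \<and> x' i \<le> M"
      using xB by (auto simp: vbox_def)
    have "\<phi> \<alpha> \<in> B4 D M" unfolding \<phi>_def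
    proof (intro SigmaI)
      show "\<alpha> \<in> vbox D M" by (rule aB)
      show "(\<lambda>i. \<alpha> i + y i - x' i) \<in> vbox D M" unfolding vbox_def
      proof (intro CollectI conjI allI impI)
        fix i assume "i < D" then show "\<alpha> i + y i - x' i \<le> M" using c[of i] Ms[of i] by linarith
      next
        fix i assume "D \<le> i" then show "\<alpha> i + y i - x' i = 0" using z[of i] by simp
      qed
      show "(\<lambda>i. x' i - \<alpha> i) \<in> vbox D M" unfolding vbox_def
      proof (intro CollectI conjI allI impI)
        fix i assume "i < D" then show "x' i - \<alpha> i \<le> M" using c[of i] Ms[of i] by linarith
      next
        fix i assume "D \<le> i" then show "x' i - \<alpha> i = 0" using z[of i] by simp
      qed
      show "(\<lambda>i. x i - \<alpha> i) \<in> vbox D M" unfolding vbox_def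
      proof (intro CollectI conjI allI impI)
        fix i assume "i < D" then show "x i - \<alpha> i \<le> M" using c[of i] Ms[of i] by linarith
      next
        fix i assume "D \<le> i" then show "x i - \<alpha> i = 0" using z[of i] by simp
      qed
    qed
    moreover have "kap (\<phi> \<alpha>) = (x, y, x', y')"
    proof -
      have h: "\<alpha> i + (x i - \<alpha> i) = x i \<and> \<alpha> i + y i - x' i + (x' i - \<alpha> i) = y i \<and>
          \<alpha> i + (x' i - \<alpha> i) = x' i \<and> \<alpha> i + y i - x' i + (x i - \<alpha> i) = y' i" for i
        using c[of i] z[of i] ei[of i] by (cases "i < D") auto
      show ?thesis unfolding \<phi>_def kap_def by (simp add: fun_eq_iff h)
    qed
    ultimately show "t \<in> {t \<in> B4 D M. kap t = (x, y, x', y')}" unfolding tt mem_Collect_eq by (intro conjI)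
  qed
qed


lemma vf_cong: "(\<And>i. i < D \<Longrightarrow> u i = v i) \<Longrightarrow> vf D u = vf D v"
  unfolding vf_def by (rule prod.cong) auto

lemma vf_pos: "vf D u > 0" unfolding vf_def by (rule prod_pos) auto

lemma fiber_sum:
  fixes D M :: nat and x y x' y' :: "nat \<Rightarrow> nat"
  assumes e: "vadd x y = vadd x' y'"
  assumes xB: "x \<in> vbox D M" "y \<in> vbox D M" "x' \<in> vbox D M" "y' \<in> vbox D M"
  shows "(\<Sum>t\<in>{t \<in> B4 D M. kap t = (x, y, x', y')}. Wt D t) = vf D (vadd x y)"
proof -
  define A where "A \<equiv> {\<alpha> \<in> vbox D M. \<forall>i<D. \<alpha> i \<le> x i \<and> \<alpha> i \<le> x' i \<and> x' i \<le> \<alpha> i + y i}"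
  define \<phi> where "\<phi> \<equiv> (\<lambda>\<alpha>::nat\<Rightarrow>nat. (\<alpha>, (\<lambda>i. \<alpha> i + y i - x' i), (\<lambda>i. x' i - \<alpha> i), (\<lambda>i. x i - \<alpha> i)))"
  have ei: "x i + y i = x' i + y' i" for i using e by (metis vadd_apply)
  define g where "g i a = (if a \<le> x i \<and> a \<le> x' i \<and> x' i \<le> a + y i then fact (x i) * fact (y i) * fact (x' i) * fact (y' i) /
            (fact a * fact (a + y i - x' i) * fact (x' i - a) * fact (x i - a)) else (0::real))" for i a
  have "(\<Sum>t\<in>{t \<in> B4 D M. kap t = (x, y, x', y')}. Wt D t) = (\<Sum>t\<in>\<phi> ` A. Wt D t)"
    using fiber_eq(1)[OF e xB] unfolding A_def \<phi>_def by simp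
  also have "\<dots> = (\<Sum>\<alpha>\<in>A. Wt D (\<phi> \<alpha>))"
    using fiber_eq(2)[OF e xB] unfolding A_def \<phi>_def by (simp add: sum.reindex)
  also have "\<dots> = (\<Sum>\<alpha>\<in>vbox D M. \<Prod>i<D. g i (\<alpha> i))"
  proof (rule sum.mono_neutral_cong_left)
    show "finite (vbox D M)" by simp
    show "A \<subseteq> vbox D M" unfolding A_def by auto
    show "\<forall>\<alpha>\<in>vbox D M - A. (\<Prod>i<D. g i (\<alpha> i)) = 0"
    proof
      fix \<alpha> assume "\<alpha> \<in> vbox D M - A"
      then obtain i where "i < D" "\<not> (\<alpha> i \<le> x i \<and> \<alpha> i \<le> x' i \<and> x' i \<le> \<alpha> i + y i)"
        unfolding A_def by auto
      then show "(\<Prod>i<D. g i (\<alpha> i)) = 0" by (intro prod_zero) (auto simp: g_def)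
    qed
    show "Wt D (\<phi> \<alpha>) = (\<Prod>i<D. g i (\<alpha> i))" if a: "\<alpha> \<in> A" for \<alpha>
    proof -
      have c: "\<And>i. i < D \<Longrightarrow> \<alpha> i \<le> x i \<and> \<alpha> i \<le> x' i \<and> x' i \<le> \<alpha> i + y i"
        using a unfolding A_def by auto
      have "Wt D (\<phi> \<alpha>) = vf D x * vf D y * vf D x' * vf D y' /
         (vf D \<alpha> * vf D (\<lambda>i. \<alpha> i + y i - x' i) * vf D (\<lambda>i. x' i - \<alpha> i) * vf D (\<lambda>i. x i - \<alpha> i))"
      proof -
        have "vf D (vadd \<alpha> (\<lambda>i. x i - \<alpha> i)) = vf D x" by (rule vf_cong) (use c in auto)
        moreover have "vf D (vadd (\<lambda>i. \<alpha> i + y i - x' i) (\<lambda>i. x' i - \<alpha> i)) = vf D y" by (rule vf_cong) (use c in auto)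
        moreover have "vf D (vadd \<alpha> (\<lambda>i. x' i - \<alpha> i)) = vf D x'" by (rule vf_cong) (use c in auto)
        moreover have "vf D (vadd (\<lambda>i. \<alpha> i + y i - x' i) (\<lambda>i. x i - \<alpha> i)) = vf D y'"
        proof (rule vf_cong)
          fix i assume "i < D" then show "vadd (\<lambda>i. \<alpha> i + y i - x' i) (\<lambda>i. x i - \<alpha> i) i = y' i"
            using c[of i] ei[of i] by simp
        qed
        ultimately show ?thesis unfolding Wt_def \<phi>_def by simp
      qed
      also have "\<dots> = (\<Prod>i<D. g i (\<alpha> i))"
        unfolding vf_def g_def using c
        by (simp add: prod.distrib[symmetric] prod_dividef[symmetric])
      finally show ?thesis .
    qed
  qed
  also have "\<dots> = (\<Prod>i<D. \<Sum>a\<le>M. g i a)" by (rule sum_prod_vbox)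
  also have "\<dots> = (\<Prod>i<D. fact (x i + y i))"
  proof (rule prod.cong[OF refl])
    fix i assume "i \<in> {..<D}"
    then have "x i \<le> M" using xB by (auto simp: vbox_def)
    then show "(\<Sum>a\<le>M. g i a) = fact (x i + y i)" unfolding g_def by (rule vand1[OF ei])
  qed
  also have "\<dots> = vf D (vadd x y)" by (simp add: vf_def)
  finally show ?thesis .
qed



definition Hf :: "((nat\<Rightarrow>nat) \<Rightarrow> complex) \<Rightarrow> ((nat\<Rightarrow>nat) \<Rightarrow> complex) \<Rightarrow>
   (nat \<Rightarrow> nat) \<times> (nat \<Rightarrow> nat) \<times> (nat \<Rightarrow> nat) \<times> (nat \<Rightarrow> nat) \<Rightarrow> complex" where
  "Hf f g k = (case k of (x, y, x', y') \<Rightarrow> f x * g y * cnj (f x') * cnj (g y'))"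

definition Lw :: "nat \<Rightarrow> (nat \<Rightarrow> nat) \<times> (nat \<Rightarrow> nat) \<times> (nat \<Rightarrow> nat) \<times> (nat \<Rightarrow> nat) \<Rightarrow> real" where
  "Lw D k = (case k of (x, y, x', y') \<Rightarrow> if vadd x y = vadd x' y' then vf D (vadd x y) else 0)"

definition conv :: "nat \<Rightarrow> nat \<Rightarrow> ((nat\<Rightarrow>nat) \<Rightarrow> complex) \<Rightarrow> ((nat\<Rightarrow>nat) \<Rightarrow> complex) \<Rightarrow> (nat \<Rightarrow> nat) \<Rightarrow> complex" where
  "conv D M f g \<gamma> = (\<Sum>a\<in>vbox D M. \<Sum>b\<in>vbox D M. if vadd a b = \<gamma> then f a * g b else 0)"

lemma sum4: "(\<Sum>k\<in>A \<times> B \<times> C \<times> E. h k) = (\<Sum>x\<in>A. \<Sum>y\<in>B. \<Sum>x'\<in>C. \<Sum>y'\<in>E. h (x, y, x', y'))"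
  by (simp add: sum.cartesian_product)

lemma vadd_vbox: "a \<in> vbox D M \<Longrightarrow> b \<in> vbox D M \<Longrightarrow> vadd a b \<in> vbox D (2*M)"
  by (auto simp: vbox_def) (metis add_mono mult_2)

lemma lhs_expand:
  shows "(\<Sum>\<gamma>\<in>vbox D (2*M). of_real (vf D \<gamma>) * conv D M f g \<gamma> * cnj (conv D M f g \<gamma>))
       = (\<Sum>k\<in>B4 D M. Hf f g k * of_real (Lw D k))"
proof -
  let ?B = "vbox D M"
  have e: "conv D M f g \<gamma> * cnj (conv D M f g \<gamma>) =
     (\<Sum>x\<in>?B. \<Sum>y\<in>?B. \<Sum>x'\<in>?B. \<Sum>y'\<in>?B. if vadd x y = \<gamma> \<and> vadd x' y' = \<gamma> then Hf f g (x,y,x',y') else 0)" for \<gamma>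
    apply (subst mult.commute)
    unfolding conv_def cnj_sum sum_distrib_left sum_distrib_right
    by (intro sum.cong refl) (auto simp: Hf_def mult_ac)
  have "(\<Sum>\<gamma>\<in>vbox D (2*M). of_real (vf D \<gamma>) * conv D M f g \<gamma> * cnj (conv D M f g \<gamma>))
     = (\<Sum>\<gamma>\<in>vbox D (2*M). \<Sum>x\<in>?B. \<Sum>y\<in>?B. \<Sum>x'\<in>?B. \<Sum>y'\<in>?B.
          if vadd x y = \<gamma> \<and> vadd x' y' = \<gamma> then of_real (vf D \<gamma>) * Hf f g (x,y,x',y') else 0)"
    by (simp only: mult.assoc e sum_distrib_left) (intro sum.cong refl, simp)
  also have "\<dots> = (\<Sum>x\<in>?B. \<Sum>y\<in>?B. \<Sum>x'\<in>?B. \<Sum>y'\<in>?B. \<Sum>\<gamma>\<in>vbox D (2*M).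
          if vadd x y = \<gamma> \<and> vadd x' y' = \<gamma> then of_real (vf D \<gamma>) * Hf f g (x,y,x',y') else 0)"
    apply (subst sum.swap[where A="vbox D (2*M)"]) apply (rule sum.cong[OF refl])
    apply (subst sum.swap[where A="vbox D (2*M)"]) apply (rule sum.cong[OF refl])
    apply (subst sum.swap[where A="vbox D (2*M)"]) apply (rule sum.cong[OF refl])
    apply (subst sum.swap[where A="vbox D (2*M)"]) by (rule refl)
  also have "\<dots> = (\<Sum>x\<in>?B. \<Sum>y\<in>?B. \<Sum>x'\<in>?B. \<Sum>y'\<in>?B. Hf f g (x,y,x',y') * of_real (Lw D (x,y,x',y')))"
  proof (intro sum.cong refl)
    fix x y x' y' assume "x \<in> ?B" "y \<in> ?B" "x' \<in> ?B" "y' \<in> ?B"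
    then have m: "vadd x y \<in> vbox D (2*M)" by (simp add: vadd_vbox)
    have "(\<Sum>\<gamma>\<in>vbox D (2*M). if vadd x y = \<gamma> \<and> vadd x' y' = \<gamma> then of_real (vf D \<gamma>) * Hf f g (x,y,x',y') else 0)
       = (\<Sum>\<gamma>\<in>vbox D (2*M). if vadd x y = \<gamma> then (if vadd x' y' = vadd x y then of_real (vf D (vadd x y)) * Hf f g (x,y,x',y') else 0) else 0)"
      by (intro sum.cong refl) auto
    also have "\<dots> = (if vadd x' y' = vadd x y then of_real (vf D (vadd x y)) * Hf f g (x,y,x',y') else 0)"
      using m by (simp add: sum.delta)
    also have "\<dots> = Hf f g (x,y,x',y') * of_real (Lw D (x,y,x',y'))" by (auto simp: Lw_def)
    finally show "(\<Sum>\<gamma>\<in>vbox D (2*M). if vadd x y = \<gamma> \<and> vadd x' y' = \<gamma> then of_real (vf D \<gamma>) * Hf f g (x,y,x',y') else 0)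
       = Hf f g (x,y,x',y') * of_real (Lw D (x,y,x',y'))" .
  qed
  also have "\<dots> = (\<Sum>k\<in>B4 D M. Hf f g k * of_real (Lw D k))"
    by (simp only: sum4)
  finally show ?thesis .
qed


definition Sg :: "nat \<Rightarrow> nat \<Rightarrow> ((nat\<Rightarrow>nat) \<Rightarrow> complex) \<Rightarrow> ((nat\<Rightarrow>nat) \<Rightarrow> complex) \<Rightarrow> (nat \<Rightarrow> nat) \<Rightarrow> (nat \<Rightarrow> nat) \<Rightarrow> complex" where
  "Sg D M f g \<alpha> c = (\<Sum>r\<in>vbox D M. cnj (f (vadd \<alpha> r)) * g (vadd c r) *
       of_real (vf D (vadd \<alpha> r) * vf D (vadd c r) / vf D r))"

lemma rhs_expand1:
  "(\<Sum>\<alpha>\<in>vbox D M. \<Sum>c\<in>vbox D M. of_real (1 / (vf D \<alpha> * vf D c)) * (Sg D M f g \<alpha> c * cnj (Sg D M f g \<alpha> c)))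
   = (\<Sum>t\<in>B4 D M. Hf f g (kap t) * of_real (Wt D t))"
proof -
  let ?B = "vbox D M"
  have e: "Sg D M f g \<alpha> c * cnj (Sg D M f g \<alpha> c) =
     (\<Sum>r\<in>?B. \<Sum>r'\<in>?B. cnj (f (vadd \<alpha> r)) * g (vadd c r) * f (vadd \<alpha> r') * cnj (g (vadd c r')) *
        of_real (vf D (vadd \<alpha> r) * vf D (vadd c r) / vf D r * (vf D (vadd \<alpha> r') * vf D (vadd c r') / vf D r')))" for \<alpha> c
    apply (subst mult.commute)
    unfolding Sg_def cnj_sum sum_distrib_left sum_distrib_right
    by (intro sum.cong refl) (simp add: mult_ac)
  have w: "of_real (1 / (vf D \<alpha> * vf D c)) * (cnj (f (vadd \<alpha> r)) * g (vadd c r) * f (vadd \<alpha> r') * cnj (g (vadd c r')) *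
        of_real (vf D (vadd \<alpha> r) * vf D (vadd c r) / vf D r * (vf D (vadd \<alpha> r') * vf D (vadd c r') / vf D r')))
      = Hf f g (kap (\<alpha>, c, r, r')) * of_real (Wt D (\<alpha>, c, r, r'))" for \<alpha> c r r'
  proof -
    have r: "1 / (vf D \<alpha> * vf D c) * (vf D (vadd \<alpha> r) * vf D (vadd c r) / vf D r * (vf D (vadd \<alpha> r') * vf D (vadd c r') / vf D r'))
       = Wt D (\<alpha>, c, r, r')"
      unfolding Wt_def by (simp add: field_simps)
    have h: "Hf f g (kap (\<alpha>, c, r, r')) = cnj (f (vadd \<alpha> r)) * g (vadd c r) * f (vadd \<alpha> r') * cnj (g (vadd c r'))"
      unfolding Hf_def kap_def by (simp add: mult_ac)
    have "\<And>(A::real) B (P::complex). of_real A * (P * of_real B) = P * of_real (A * B)"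
      by (simp only: of_real_mult mult_ac)
    then show ?thesis unfolding h r[symmetric] by blast
  qed
  have "(\<Sum>\<alpha>\<in>?B. \<Sum>c\<in>?B. of_real (1 / (vf D \<alpha> * vf D c)) * (Sg D M f g \<alpha> c * cnj (Sg D M f g \<alpha> c)))
     = (\<Sum>\<alpha>\<in>?B. \<Sum>c\<in>?B. \<Sum>r\<in>?B. \<Sum>r'\<in>?B. Hf f g (kap (\<alpha>, c, r, r')) * of_real (Wt D (\<alpha>, c, r, r')))"
    unfolding e sum_distrib_left w ..
  also have "\<dots> = (\<Sum>t\<in>B4 D M. Hf f g (kap t) * of_real (Wt D t))"
    by (simp only: sum4)
  finally show ?thesis .
qed


lemma vbox_mono: "M \<le> N \<Longrightarrow> vbox D M \<subseteq> vbox D N"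
  by (auto simp: vbox_def intro: order.trans)

lemma rhs_expand2:
  assumes sf: "\<And>x. f x \<noteq> 0 \<Longrightarrow> x \<in> vbox D M" and sg: "\<And>x. g x \<noteq> 0 \<Longrightarrow> x \<in> vbox D M"
  shows "(\<Sum>t\<in>B4 D M. Hf f g (kap t) * of_real (Wt D t)) = (\<Sum>k\<in>B4 D M. Hf f g k * of_real (Lw D k))"
proof -
  let ?T = "B4 D (2*M)"
  have im: "kap ` B4 D M \<subseteq> ?T" by (auto simp: kap_def vadd_vbox)
  have "(\<Sum>t\<in>B4 D M. Hf f g (kap t) * of_real (Wt D t))
      = (\<Sum>k\<in>?T. \<Sum>t\<in>{t. t \<in> B4 D M \<and> kap t = k}. Hf f g (kap t) * of_real (Wt D t))"
    by (rule sum.group[symmetric]) (use im in auto)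
  also have "\<dots> = (\<Sum>k\<in>?T. Hf f g k * of_real (\<Sum>t\<in>{t \<in> B4 D M. kap t = k}. Wt D t))"
    by (intro sum.cong refl) (simp add: sum_distrib_left of_real_sum)
  also have "\<dots> = (\<Sum>k\<in>B4 D M. Hf f g k * of_real (\<Sum>t\<in>{t \<in> B4 D M. kap t = k}. Wt D t))"
  proof (rule sum.mono_neutral_cong_right)
    show "finite ?T" by simp
    have "vbox D M \<subseteq> vbox D (2*M)" by (rule vbox_mono) simp
    then show "B4 D M \<subseteq> ?T" by auto
    show "\<forall>k\<in>?T - B4 D M. Hf f g k * of_real (\<Sum>t\<in>{t \<in> B4 D M. kap t = k}. Wt D t) = 0"
    proof
      fix k assume "k \<in> ?T - B4 D M"
      then obtain x y x' y' where k: "k = (x, y, x', y')" and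
         "x \<notin> vbox D M \<or> y \<notin> vbox D M \<or> x' \<notin> vbox D M \<or> y' \<notin> vbox D M"
        by (cases k) auto
      then have "Hf f g k = 0" unfolding Hf_def using sf sg by auto
      then show "Hf f g k * of_real (\<Sum>t\<in>{t \<in> B4 D M. kap t = k}. Wt D t) = 0" by simp
    qed
  qed simp
  also have "\<dots> = (\<Sum>k\<in>B4 D M. Hf f g k * of_real (Lw D k))"
  proof (intro sum.cong refl)
    fix k assume "k \<in> B4 D M"
    then obtain x y x' y' where k: "k = (x, y, x', y')" and
         B: "x \<in> vbox D M" "y \<in> vbox D M" "x' \<in> vbox D M" "y' \<in> vbox D M"
        by (cases k) auto
    show "Hf f g k * of_real (\<Sum>t\<in>{t \<in> B4 D M. kap t = k}. Wt D t) = Hf f g k * of_real (Lw D k)"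
    proof (cases "vadd x y = vadd x' y'")
      case True
      then show ?thesis unfolding k Lw_def using fiber_sum[OF True B] by simp
    next
      case False
      have E: "{t \<in> B4 D M. kap t = (x, y, x', y')} = {}" by (rule fiber_empty[OF False])
      show ?thesis unfolding k E sum.empty Lw_def using False by simp
    qed
  qed
  finally show ?thesis .
qed

lemma gram:
  assumes sf: "\<And>x. f x \<noteq> 0 \<Longrightarrow> x \<in> vbox D M" and sg: "\<And>x. g x \<noteq> 0 \<Longrightarrow> x \<in> vbox D M"
  shows "(\<Sum>\<gamma>\<in>vbox D (2*M). of_real (vf D \<gamma>) * conv D M f g \<gamma> * cnj (conv D M f g \<gamma>))
   = (\<Sum>\<alpha>\<in>vbox D M. \<Sum>c\<in>vbox D M. of_real (1 / (vf D \<alpha> * vf D c)) * (Sg D M f g \<alpha> c * cnj (Sg D M f g \<alpha> c)))"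
  apply (subst lhs_expand) apply (subst rhs_expand1) apply (subst rhs_expand2[OF sf sg]) by auto



lemma gram_real:
  assumes sf: "\<And>x. f x \<noteq> 0 \<Longrightarrow> x \<in> vbox D M" and sg: "\<And>x. g x \<noteq> 0 \<Longrightarrow> x \<in> vbox D M"
  shows "(\<Sum>\<gamma>\<in>vbox D (2*M). vf D \<gamma> * (cmod (conv D M f g \<gamma>))\<^sup>2)
   = (\<Sum>\<alpha>\<in>vbox D M. \<Sum>c\<in>vbox D M. 1 / (vf D \<alpha> * vf D c) * (cmod (Sg D M f g \<alpha> c))\<^sup>2)"
proof -
  have "complex_of_real (\<Sum>\<gamma>\<in>vbox D (2*M). vf D \<gamma> * (cmod (conv D M f g \<gamma>))\<^sup>2)
     = complex_of_real (\<Sum>\<alpha>\<in>vbox D M. \<Sum>c\<in>vbox D M. 1 / (vf D \<alpha> * vf D c) * (cmod (Sg D M f g \<alpha> c))\<^sup>2)"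
    using gram[where f=f and g=g and D=D and M=M, OF sf sg] by (simp add: of_real_sum of_real_mult complex_norm_square[symmetric] mult.assoc)
  then show ?thesis by (simp only: of_real_eq_iff)
qed

lemma vf_zero [simp]: "vf D (\<lambda>_. 0) = 1" by (simp add: vf_def)

lemma zero_vbox [simp]: "(\<lambda>_. 0) \<in> vbox D M" by (simp add: vbox_def)

lemma antichain_ineq:
  assumes sf: "\<And>x. f x \<noteq> 0 \<Longrightarrow> x \<in> vbox D M" and sg: "\<And>x. g x \<noteq> 0 \<Longrightarrow> x \<in> vbox D M"
    and ac: "\<And>x y. f x \<noteq> 0 \<Longrightarrow> f y \<noteq> 0 \<Longrightarrow> (\<forall>i. x i \<le> y i) \<Longrightarrow> x = y"
  shows "(\<Sum>x\<in>vbox D M. vf D x * (cmod (f x))\<^sup>2) * (\<Sum>y\<in>vbox D M. vf D y * (cmod (g y))\<^sup>2)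
     \<le> (\<Sum>\<gamma>\<in>vbox D (2*M). vf D \<gamma> * (cmod (conv D M f g \<gamma>))\<^sup>2)"
proof -
  let ?B = "vbox D M"
  let ?A = "{\<alpha> \<in> ?B. f \<alpha> \<noteq> 0}"
  have S: "Sg D M f g \<alpha> c = cnj (f \<alpha>) * g c * of_real (vf D \<alpha> * vf D c)" if a: "\<alpha> \<in> ?A" for \<alpha> c
  proof -
    have "Sg D M f g \<alpha> c = (\<Sum>r\<in>{\<lambda>_. 0}. cnj (f (vadd \<alpha> r)) * g (vadd c r) *
       of_real (vf D (vadd \<alpha> r) * vf D (vadd c r) / vf D r))"
      unfolding Sg_def
    proof (rule sum.mono_neutral_right)
      show "\<forall>r\<in>?B - {\<lambda>_. 0}. cnj (f (vadd \<alpha> r)) * g (vadd c r) *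
         of_real (vf D (vadd \<alpha> r) * vf D (vadd c r) / vf D r) = 0"
      proof
        fix r assume r: "r \<in> ?B - {\<lambda>_. 0}"
        have "f (vadd \<alpha> r) = 0"
        proof (rule ccontr)
          assume "f (vadd \<alpha> r) \<noteq> 0"
          then have "\<alpha> = vadd \<alpha> r" using a by (intro ac) auto
          then have "r = (\<lambda>_. 0)" by (metis (mono_tags) add_cancel_right_right ext vadd_apply)
          with r show False by simp
        qed
        then show "cnj (f (vadd \<alpha> r)) * g (vadd c r) * of_real (vf D (vadd \<alpha> r) * vf D (vadd c r) / vf D r) = 0"
          by simp
      qed
    qed auto
    also have "\<dots> = cnj (f \<alpha>) * g c * of_real (vf D \<alpha> * vf D c)"
    proof -
      have "vadd \<alpha> (\<lambda>_. 0) = \<alpha>" "vadd c (\<lambda>_. 0) = c" by (auto simp: fun_eq_iff)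
      then show ?thesis by simp
    qed
    finally show ?thesis .
  qed
  have "(\<Sum>x\<in>?B. vf D x * (cmod (f x))\<^sup>2) * (\<Sum>y\<in>?B. vf D y * (cmod (g y))\<^sup>2)
      = (\<Sum>\<alpha>\<in>?A. \<Sum>c\<in>?B. vf D \<alpha> * (cmod (f \<alpha>))\<^sup>2 * (vf D c * (cmod (g c))\<^sup>2))"
  proof -
    have "(\<Sum>x\<in>?B. vf D x * (cmod (f x))\<^sup>2) = (\<Sum>x\<in>?A. vf D x * (cmod (f x))\<^sup>2)"
      by (rule sum.mono_neutral_right) auto
    then show ?thesis by (simp only: sum_product)
  qed
  also have "\<dots> = (\<Sum>\<alpha>\<in>?A. \<Sum>c\<in>?B. 1 / (vf D \<alpha> * vf D c) * (cmod (Sg D M f g \<alpha> c))\<^sup>2)"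
  proof (intro sum.cong refl)
    fix \<alpha> c assume "\<alpha> \<in> ?A"
    then have "(cmod (Sg D M f g \<alpha> c))\<^sup>2 = (cmod (f \<alpha>))\<^sup>2 * (cmod (g c))\<^sup>2 * (vf D \<alpha> * vf D c)\<^sup>2"
      using vf_pos[of D \<alpha>] vf_pos[of D c]
      by (simp add: S norm_mult power_mult_distrib abs_of_pos)
    then show "vf D \<alpha> * (cmod (f \<alpha>))\<^sup>2 * (vf D c * (cmod (g c))\<^sup>2) = 1 / (vf D \<alpha> * vf D c) * (cmod (Sg D M f g \<alpha> c))\<^sup>2"
      using vf_pos[of D \<alpha>] vf_pos[of D c] by (simp add: field_simps power2_eq_square)
  qed
  also have "\<dots> \<le> (\<Sum>\<alpha>\<in>?B. \<Sum>c\<in>?B. 1 / (vf D \<alpha> * vf D c) * (cmod (Sg D M f g \<alpha> c))\<^sup>2)"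
    by (rule sum_mono2) (auto intro!: sum_nonneg simp: less_imp_le[OF vf_pos])
  also have "\<dots> = (\<Sum>\<gamma>\<in>vbox D (2*M). vf D \<gamma> * (cmod (conv D M f g \<gamma>))\<^sup>2)"
    by (rule gram_real[OF sf sg, symmetric])
  finally show ?thesis .
qed



abbreviation pk :: "('a \<Rightarrow>\<^sub>0 'b::zero) \<Rightarrow> 'a set" where "pk \<equiv> Poly_Mapping.keys"
abbreviation pl :: "('a \<Rightarrow>\<^sub>0 'b::zero) \<Rightarrow> 'a \<Rightarrow> 'b" where "pl \<equiv> Poly_Mapping.lookup"

lemma lookup_mult_fin:
  fixes P Q :: mpoly_c
  shows "pl (P * Q) \<mu> = (\<Sum>\<alpha>\<in>pk P. \<Sum>\<beta>\<in>pk Q. if \<alpha> + \<beta> = \<mu> then pl P \<alpha> * pl Q \<beta> else 0)"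
proof -
  have inner: "(\<Sum>q. pl Q q when \<mu> = l + q) = (\<Sum>\<beta>\<in>pk Q. if l + \<beta> = \<mu> then pl Q \<beta> else 0)" for l
    by (subst Sum_any.expand_superset[of "pk Q"]) (auto simp: in_keys_iff intro!: sum.cong)
  have "pl (P * Q) \<mu> = (\<Sum>l. pl P l * (\<Sum>\<beta>\<in>pk Q. if l + \<beta> = \<mu> then pl Q \<beta> else 0))"
    by (simp add: lookup_mult inner)
  also have "\<dots> = (\<Sum>l\<in>pk P. pl P l * (\<Sum>\<beta>\<in>pk Q. if l + \<beta> = \<mu> then pl Q \<beta> else 0))"
    by (subst Sum_any.expand_superset[of "pk P"]) (auto simp: in_keys_iff)
  also have "\<dots> = (\<Sum>\<alpha>\<in>pk P. \<Sum>\<beta>\<in>pk Q. if \<alpha> + \<beta> = \<mu> then pl P \<alpha> * pl Q \<beta> else 0)"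
    by (simp add: sum_distrib_left if_distrib cong: if_cong)
  finally show ?thesis .
qed

lemma mi_deg_eq:
  assumes "pk \<alpha> \<subseteq> {..<d}"
  shows "mi_deg \<alpha> = (\<Sum>i<d. pl \<alpha> i)"
  unfolding mi_deg_def using assms by (intro sum.mono_neutral_left) (auto simp: in_keys_iff)

lemma mi_fact_eq:
  assumes "pk \<alpha> \<subseteq> {..<d}"
  shows "real (mi_fact \<alpha>) = (\<Prod>i<d. fact (pl \<alpha> i))"
  unfolding mi_fact_def of_nat_prod of_nat_fact using assms
  by (intro prod.mono_neutral_left) (auto simp: in_keys_iff)

lemma lookup_le_deg:
  assumes "pk \<alpha> \<subseteq> {..<d}" shows "pl \<alpha> i \<le> mi_deg \<alpha>"
proof (cases "i < d")
  case True
  then show ?thesis unfolding mi_deg_eq[OF assms] by (intro member_le_sum) auto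
next
  case False
  then have "pl \<alpha> i = 0" using assms by (auto simp: in_keys_iff)
  then show ?thesis by simp
qed

lemma keys_add_sub:
  assumes "pk \<alpha> \<subseteq> {..<d}" "pk \<beta> \<subseteq> {..<d}"
  shows "pk (\<alpha> + \<beta>) \<subseteq> {..<d}"
  using keys_add[of \<alpha> \<beta>] assms by auto

lemma mi_deg_add:
  assumes "pk \<alpha> \<subseteq> {..<d}" "pk \<beta> \<subseteq> {..<d}"
  shows "mi_deg (\<alpha> + \<beta>) = mi_deg \<alpha> + mi_deg \<beta>"
  using assms keys_add_sub[OF assms] by (simp add: mi_deg_eq lookup_add sum.distrib)

lemma apolar_self:
  "Re (apolar_inner P P) = (\<Sum>\<alpha>\<in>pk P. real (mi_fact \<alpha>) * (cmod (pl P \<alpha>))\<^sup>2)"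
proof -
  have "apolar_inner P P = (\<Sum>\<alpha>\<in>pk P. of_real (real (mi_fact \<alpha>) * (cmod (pl P \<alpha>))\<^sup>2))"
    unfolding apolar_inner_def
    by (simp add: mult.assoc complex_norm_square[symmetric])
  then show ?thesis by (simp only: Re_sum Re_complex_of_real)
qed



definition hh :: "nat \<Rightarrow> nat \<Rightarrow> (nat \<Rightarrow>\<^sub>0 nat) \<Rightarrow> nat \<Rightarrow> nat" where
  "hh d m \<alpha> = (pl \<alpha>)(d := (m - mi_deg \<alpha>) div 2)"

definition Ff :: "nat \<Rightarrow> nat \<Rightarrow> mpoly_c \<Rightarrow> (nat \<Rightarrow> nat) \<Rightarrow> complex" where
  "Ff d m P x = (\<Sum>\<alpha>\<in>pk P. if hh d m \<alpha> = x then pl P \<alpha> else 0)"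

lemma hh_inj:
  assumes "pk \<alpha> \<subseteq> {..<d}" "pk \<beta> \<subseteq> {..<d}" "hh d m \<alpha> = hh d m' \<beta>"
  shows "\<alpha> = \<beta>"
proof (rule poly_mapping_eqI)
  fix i show "pl \<alpha> i = pl \<beta> i"
  proof (cases "i = d")
    case True
    then have "pl \<alpha> i = 0" "pl \<beta> i = 0" using assms(1,2) by (auto simp: in_keys_iff)
    then show ?thesis by simp
  next
    case False
    then show ?thesis using fun_cong[OF assms(3), of i] by (simp add: hh_def)
  qed
qed

lemma even_form_keys: "even_form d m P \<Longrightarrow> \<alpha> \<in> pk P \<Longrightarrow> pk \<alpha> \<subseteq> {..<d}"
  by (simp add: even_form_def)

lemma even_form_deg: "even_form d m P \<Longrightarrow> \<alpha> \<in> pk P \<Longrightarrow> mi_deg \<alpha> \<le> m"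
  by (simp add: even_form_def)

lemma even_form_even: "even_form d m P \<Longrightarrow> \<alpha> \<in> pk P \<Longrightarrow> even (mi_deg \<alpha>)"
  unfolding even_form_def mi_deg_def by (auto intro!: dvd_sum)

lemma Ff_hh:
  assumes "even_form d m P" "\<alpha> \<in> pk P"
  shows "Ff d m P (hh d m \<alpha>) = pl P \<alpha>"
proof -
  have "Ff d m P (hh d m \<alpha>) = (\<Sum>\<beta>\<in>pk P. if \<beta> = \<alpha> then pl P \<beta> else 0)"
    unfolding Ff_def
  proof (intro sum.cong refl)
    fix \<beta> assume "\<beta> \<in> pk P"
    then have "hh d m \<beta> = hh d m \<alpha> \<longleftrightarrow> \<beta> = \<alpha>"
      using hh_inj[of \<beta> d \<alpha> m m] even_form_keys[OF assms(1)] assms(2) by auto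
    then show "(if hh d m \<beta> = hh d m \<alpha> then pl P \<beta> else 0) = (if \<beta> = \<alpha> then pl P \<beta> else 0)" by simp
  qed
  also have "\<dots> = pl P \<alpha>" using assms(2) by (simp add: sum.delta)
  finally show ?thesis .
qed

lemma Ff_nz: "Ff d m P x \<noteq> 0 \<Longrightarrow> \<exists>\<alpha>\<in>pk P. x = hh d m \<alpha>"
proof (rule ccontr)
  assume nz: "Ff d m P x \<noteq> 0" and "\<not> (\<exists>\<alpha>\<in>pk P. x = hh d m \<alpha>)"
  then have "\<forall>\<alpha>\<in>pk P. (if hh d m \<alpha> = x then pl P \<alpha> else 0) = 0" by auto
  then have "Ff d m P x = 0" unfolding Ff_def by (rule sum.neutral)
  with nz show False by simp
qed

lemma hh_vbox:
  assumes "even_form d m P" "\<alpha> \<in> pk P" "m \<le> M"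
  shows "hh d m \<alpha> \<in> vbox (Suc d) M"
proof -
  have k: "pk \<alpha> \<subseteq> {..<d}" by (rule even_form_keys[OF assms(1,2)])
  have dg: "mi_deg \<alpha> \<le> m" by (rule even_form_deg[OF assms(1,2)])
  show ?thesis unfolding vbox_def
  proof (intro CollectI conjI allI impI)
    fix i assume "i < Suc d"
    show "hh d m \<alpha> i \<le> M"
    proof (cases "i = d")
      case True then show ?thesis using assms(3) by (simp add: hh_def)
    next
      case False then show ?thesis using lookup_le_deg[OF k, of i] dg assms(3) by (simp add: hh_def)
    qed
  next
    fix i assume "Suc d \<le> i"
    then have "i \<noteq> d" "i \<notin> pk \<alpha>" using k by auto
    then show "hh d m \<alpha> i = 0" by (simp add: hh_def in_keys_iff)
  qed
qed

lemma hh_weight: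
  assumes "pk \<alpha> \<subseteq> {..<d}" "mi_deg \<alpha> \<le> m" "even (mi_deg \<alpha>)" "even m"
  shows "(\<Sum>i<d. hh d m \<alpha> i) + 2 * hh d m \<alpha> d = m"
proof -
  have "(\<Sum>i<d. hh d m \<alpha> i) = mi_deg \<alpha>" unfolding mi_deg_eq[OF assms(1)] hh_def
    by (intro sum.cong) auto
  moreover have "2 * hh d m \<alpha> d = m - mi_deg \<alpha>" using assms(3,4) by (simp add: hh_def)
  ultimately show ?thesis using assms(2) by simp
qed

lemma vf_hh:
  assumes "pk \<alpha> \<subseteq> {..<d}"
  shows "vf (Suc d) (hh d m \<alpha>) = real (mi_fact \<alpha>) * fact ((m - mi_deg \<alpha>) div 2)"
proof -
  have "vf (Suc d) (hh d m \<alpha>) = (\<Prod>i<d. fact (hh d m \<alpha> i)) * fact (hh d m \<alpha> d)"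
    by (simp add: vf_def)
  also have "(\<Prod>i<d. fact (hh d m \<alpha> i)) = (real (mi_fact \<alpha>) :: real)"
    unfolding mi_fact_eq[OF assms] hh_def by (intro prod.cong) auto
  also have "fact (hh d m \<alpha> d) = fact ((m - mi_deg \<alpha>) div 2)" by (simp add: hh_def)
  finally show ?thesis .
qed

lemma Ff_antichain:
  assumes ef: "even_form d m P" "even m"
    and nz: "Ff d m P x \<noteq> 0" "Ff d m P y \<noteq> 0" and le: "\<forall>i. x i \<le> y i"
  shows "x = y"
proof -
  obtain \<alpha> \<beta> where a: "\<alpha> \<in> pk P" "x = hh d m \<alpha>" and b: "\<beta> \<in> pk P" "y = hh d m \<beta>"
    using Ff_nz[OF nz(1)] Ff_nz[OF nz(2)] by blast
  have wx: "(\<Sum>i<d. x i) + 2 * x d = m" unfolding a(2)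
    by (rule hh_weight) (use ef a(1) even_form_keys even_form_deg even_form_even in auto)
  have wy: "(\<Sum>i<d. y i) + 2 * y d = m" unfolding b(2)
    by (rule hh_weight) (use ef b(1) even_form_keys even_form_deg even_form_even in auto)
  have s1: "(\<Sum>i<d. x i) \<le> (\<Sum>i<d. y i)" using le by (intro sum_mono) auto
  have xd: "x d = y d" using wx wy s1 le[rule_format, of d] by linarith
  have s: "(\<Sum>i<d. x i) = (\<Sum>i<d. y i)" using wx wy xd by simp
  have lt: "i < d \<Longrightarrow> x i = y i" for i
  proof (rule ccontr)
    assume "i < d" "x i \<noteq> y i"
    then have "x i < y i" using le le_neq_implies_less by blast
    then have "(\<Sum>i<d. x i) < (\<Sum>i<d. y i)"
      using \<open>i < d\<close> le by (intro sum_strict_mono_ex1) auto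
    with s show False by simp
  qed
  show "x = y"
  proof
    fix i show "x i = y i"
    proof (cases "i \<le> d")
      case True then show ?thesis using lt xd by (cases "i = d") auto
    next
      case False
      have "hh d m \<alpha> \<in> vbox (Suc d) m" "hh d m \<beta> \<in> vbox (Suc d) m"
        using hh_vbox[OF ef(1)] a(1) b(1) by auto
      then show ?thesis using False a(2) b(2) by (auto simp: vbox_def)
    qed
  qed
qed


lemma hh_inj_on: "even_form d m P \<Longrightarrow> inj_on (hh d m) (pk P)"
  by (rule inj_onI) (metis hh_inj even_form_keys)

lemma sum_Ff:
  assumes ef: "even_form d m P" and mM: "m \<le> M" and z: "\<And>x. Ff d m P x = 0 \<Longrightarrow> \<phi> x = 0"
  shows "(\<Sum>x\<in>vbox (Suc d) M. \<phi> x) = (\<Sum>\<alpha>\<in>pk P. \<phi> (hh d m \<alpha>))"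
proof -
  have "(\<Sum>x\<in>vbox (Suc d) M. \<phi> x) = (\<Sum>x\<in>hh d m ` pk P. \<phi> x)"
  proof (rule sum.mono_neutral_right)
    show "hh d m ` pk P \<subseteq> vbox (Suc d) M" using hh_vbox[OF ef _ mM] by auto
    show "\<forall>x\<in>vbox (Suc d) M - hh d m ` pk P. \<phi> x = 0"
    proof
      fix x assume "x \<in> vbox (Suc d) M - hh d m ` pk P"
      then have "Ff d m P x = 0" using Ff_nz[of d m P x] by blast
      then show "\<phi> x = 0" by (rule z)
    qed
  qed simp
  also have "\<dots> = (\<Sum>\<alpha>\<in>pk P. \<phi> (hh d m \<alpha>))" by (rule sum.reindex[OF hh_inj_on[OF ef], unfolded comp_def])
  finally show ?thesis .
qed

lemma Ff_norm:
  assumes ef: "even_form d m P" and mM: "m \<le> M"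
  shows "(\<Sum>x\<in>vbox (Suc d) M. vf (Suc d) x * (cmod (Ff d m P x))\<^sup>2) \<ge> Re (apolar_inner P P)"
proof -
  have "(\<Sum>x\<in>vbox (Suc d) M. vf (Suc d) x * (cmod (Ff d m P x))\<^sup>2)
      = (\<Sum>\<alpha>\<in>pk P. vf (Suc d) (hh d m \<alpha>) * (cmod (Ff d m P (hh d m \<alpha>)))\<^sup>2)"
    by (rule sum_Ff[OF ef mM]) simp
  also have "\<dots> = (\<Sum>\<alpha>\<in>pk P. vf (Suc d) (hh d m \<alpha>) * (cmod (pl P \<alpha>))\<^sup>2)"
    by (intro sum.cong refl) (simp add: Ff_hh[OF ef])
  also have "\<dots> \<ge> (\<Sum>\<alpha>\<in>pk P. real (mi_fact \<alpha>) * (cmod (pl P \<alpha>))\<^sup>2)"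
  proof (rule sum_mono)
    fix \<alpha> assume a: "\<alpha> \<in> pk P"
    have "real (mi_fact \<alpha>) \<le> vf (Suc d) (hh d m \<alpha>)"
      unfolding vf_hh[OF even_form_keys[OF ef a]]
      using mult_left_mono[OF fact_ge_1[of "(m - mi_deg \<alpha>) div 2", where 'a=real], of "real (mi_fact \<alpha>)"] by simp
    then show "real (mi_fact \<alpha>) * (cmod (pl P \<alpha>))\<^sup>2 \<le> vf (Suc d) (hh d m \<alpha>) * (cmod (pl P \<alpha>))\<^sup>2"
      by (rule mult_right_mono) simp
  qed
  finally show ?thesis unfolding apolar_self .
qed



lemma div_arith:
  fixes a b m n :: nat
  assumes "a \<le> m" "b \<le> n" "even a" "even b" "even m" "even n"
  shows "(m - a) div 2 + (n - b) div 2 = (m + n - (a + b)) div 2"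
proof -
  obtain a' b' m' n' where "a = 2*a'" "b = 2*b'" "m = 2*m'" "n = 2*n'" using assms by (auto elim!: evenE)
  moreover have "2*m' - 2*a' = 2*(m'-a')" "2*n' - 2*b' = 2*(n'-b')"
     "2*m' + 2*n' - (2*a'+2*b') = 2*(m'+n'-(a'+b'))" by (simp_all add: diff_mult_distrib2)
  ultimately show ?thesis using assms(1,2) by simp
qed

lemma hh_add:
  assumes efP: "even_form d m P" and efQ: "even_form d n Q" and a: "\<alpha> \<in> pk P" and b: "\<beta> \<in> pk Q"
    and em: "even m" and en: "even n"
  shows "vadd (hh d m \<alpha>) (hh d n \<beta>) = hh d (m + n) (\<alpha> + \<beta>)"
proof
  fix i
  have ka: "pk \<alpha> \<subseteq> {..<d}" and kb: "pk \<beta> \<subseteq> {..<d}"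
    using even_form_keys efP efQ a b by auto
  show "vadd (hh d m \<alpha>) (hh d n \<beta>) i = hh d (m + n) (\<alpha> + \<beta>) i"
  proof (cases "i = d")
    case True
    have da: "mi_deg \<alpha> \<le> m" "even (mi_deg \<alpha>)" using efP a even_form_deg even_form_even by auto
    have db: "mi_deg \<beta> \<le> n" "even (mi_deg \<beta>)" using efQ b even_form_deg even_form_even by auto
    have "(m - mi_deg \<alpha>) div 2 + (n - mi_deg \<beta>) div 2 = (m + n - (mi_deg \<alpha> + mi_deg \<beta>)) div 2"
      using da db em en by (intro div_arith) auto
    moreover have "mi_deg (\<alpha> + \<beta>) = mi_deg \<alpha> + mi_deg \<beta>" by (rule mi_deg_add[OF ka kb])
    ultimately show ?thesis using True unfolding hh_def by simp
  next
    case False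
    then show ?thesis unfolding hh_def vadd_apply by (simp add: lookup_add)
  qed
qed

definition Kset :: "mpoly_c \<Rightarrow> mpoly_c \<Rightarrow> (nat \<Rightarrow>\<^sub>0 nat) set" where
  "Kset P Q = (\<lambda>(\<alpha>, \<beta>). \<alpha> + \<beta>) ` (pk P \<times> pk Q)"

lemma finite_Kset [simp]: "finite (Kset P Q)" by (simp add: Kset_def)

lemma Kset_keys: "even_form d m P \<Longrightarrow> even_form d n Q \<Longrightarrow> \<mu> \<in> Kset P Q \<Longrightarrow> pk \<mu> \<subseteq> {..<d}"
proof -
  assume P: "even_form d m P" and Q: "even_form d n Q" and "\<mu> \<in> Kset P Q"
  then obtain a b where "a \<in> pk P" "b \<in> pk Q" "\<mu> = a + b" unfolding Kset_def by auto
  then show ?thesis using keys_add_sub[OF even_form_keys[OF P] even_form_keys[OF Q]] by auto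
qed

lemma keys_mult_Kset: "pk (P * Q) \<subseteq> Kset P Q"
  using keys_mult[of P Q] unfolding Kset_def by auto

lemma conv_Ff:
  assumes efP: "even_form d m P" and efQ: "even_form d n Q" and em: "even m" and en: "even n"
    and mM: "m \<le> M" and nM: "n \<le> M"
  shows "conv (Suc d) M (Ff d m P) (Ff d n Q) \<gamma> = (\<Sum>\<mu>\<in>Kset P Q. if hh d (m+n) \<mu> = \<gamma> then pl (P * Q) \<mu> else 0)"
proof -
  let ?B = "vbox (Suc d) M"
  have "conv (Suc d) M (Ff d m P) (Ff d n Q) \<gamma>
     = (\<Sum>\<alpha>\<in>pk P. \<Sum>b\<in>?B. if vadd (hh d m \<alpha>) b = \<gamma> then Ff d m P (hh d m \<alpha>) * Ff d n Q b else 0)"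
    unfolding conv_def by (rule sum_Ff[OF efP mM]) (auto intro!: sum.neutral)
  also have "\<dots> = (\<Sum>\<alpha>\<in>pk P. \<Sum>\<beta>\<in>pk Q. if vadd (hh d m \<alpha>) (hh d n \<beta>) = \<gamma> then Ff d m P (hh d m \<alpha>) * Ff d n Q (hh d n \<beta>) else 0)"
    by (intro sum.cong refl sum_Ff[OF efQ nM]) auto
  also have "\<dots> = (\<Sum>\<alpha>\<in>pk P. \<Sum>\<beta>\<in>pk Q. if hh d (m+n) (\<alpha> + \<beta>) = \<gamma> then pl P \<alpha> * pl Q \<beta> else 0)"
    by (intro sum.cong refl) (simp add: Ff_hh efP efQ hh_add[OF efP efQ _ _ em en])
  also have "\<dots> = (\<Sum>t\<in>pk P \<times> pk Q. if hh d (m+n) (fst t + snd t) = \<gamma> then pl P (fst t) * pl Q (snd t) else 0)"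
    unfolding sum.cartesian_product by (intro sum.cong refl) (auto simp: case_prod_beta)
  also have "\<dots> = (\<Sum>\<mu>\<in>Kset P Q. \<Sum>t\<in>{t. t \<in> pk P \<times> pk Q \<and> fst t + snd t = \<mu>}.
                     if hh d (m+n) (fst t + snd t) = \<gamma> then pl P (fst t) * pl Q (snd t) else 0)"
    by (rule sum.group[symmetric]) (auto simp: Kset_def)
  also have "\<dots> = (\<Sum>\<mu>\<in>Kset P Q. if hh d (m+n) \<mu> = \<gamma> then pl (P * Q) \<mu> else 0)"
  proof (intro sum.cong refl)
    fix \<mu>
    have pq: "pl (P * Q) \<mu> = (\<Sum>t\<in>{t. t \<in> pk P \<times> pk Q \<and> fst t + snd t = \<mu>}. pl P (fst t) * pl Q (snd t))"
    proof -
      have "pl (P * Q) \<mu> = (\<Sum>t\<in>pk P \<times> pk Q. if fst t + snd t = \<mu> then pl P (fst t) * pl Q (snd t) else 0)"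
        unfolding lookup_mult_fin sum.cartesian_product by (intro sum.cong refl) (auto simp: case_prod_beta)
      also have "\<dots> = (\<Sum>t\<in>{t. t \<in> pk P \<times> pk Q \<and> fst t + snd t = \<mu>}. pl P (fst t) * pl Q (snd t))"
        by (simp add: sum.inter_filter)
      finally show ?thesis .
    qed
    show "(\<Sum>t\<in>{t. t \<in> pk P \<times> pk Q \<and> fst t + snd t = \<mu>}.
                     if hh d (m+n) (fst t + snd t) = \<gamma> then pl P (fst t) * pl Q (snd t) else 0)
        = (if hh d (m+n) \<mu> = \<gamma> then pl (P * Q) \<mu> else 0)"
      unfolding pq by (auto intro!: sum.neutral sum.cong)
  qed
  finally show ?thesis .
qed


lemma conv_norm:
  assumes efP: "even_form d m P" and efQ: "even_form d n Q" and em: "even m" and en: "even n"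
    and mM: "m \<le> M" and nM: "n \<le> M"
  shows "(\<Sum>\<gamma>\<in>vbox (Suc d) (2*M). vf (Suc d) \<gamma> * (cmod (conv (Suc d) M (Ff d m P) (Ff d n Q) \<gamma>))\<^sup>2)
     \<le> fact ((m + n) div 2) * Re (apolar_inner (P * Q) (P * Q))"
proof -
  let ?h = "hh d (m+n)" and ?K = "Kset P Q" and ?c = "conv (Suc d) M (Ff d m P) (Ff d n Q)"
  have inj: "inj_on ?h ?K"
    by (rule inj_onI) (metis hh_inj Kset_keys[OF efP efQ])
  have c1: "?c (?h \<mu>) = pl (P * Q) \<mu>" if "\<mu> \<in> ?K" for \<mu>
  proof -
    have "?c (?h \<mu>) = (\<Sum>\<mu>'\<in>?K. if \<mu>' = \<mu> then pl (P * Q) \<mu>' else 0)"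
      unfolding conv_Ff[OF efP efQ em en mM nM]
      using inj_onD[OF inj _ _ that] that by (intro sum.cong refl) auto
    then show ?thesis using that by (simp add: sum.delta)
  qed
  have c0: "?c \<gamma> = 0" if "\<gamma> \<notin> ?h ` ?K" for \<gamma>
    unfolding conv_Ff[OF efP efQ em en mM nM] using that by (intro sum.neutral) auto
  have sub: "?h ` ?K \<subseteq> vbox (Suc d) (2*M)"
  proof
    fix \<gamma> assume "\<gamma> \<in> ?h ` ?K"
    then obtain \<alpha> \<beta> where a: "\<alpha> \<in> pk P" "\<beta> \<in> pk Q" "\<gamma> = ?h (\<alpha> + \<beta>)" unfolding Kset_def by auto
    then have "\<gamma> = vadd (hh d m \<alpha>) (hh d n \<beta>)" using hh_add[OF efP efQ _ _ em en] by simp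
    then show "\<gamma> \<in> vbox (Suc d) (2*M)"
      using vadd_vbox hh_vbox[OF efP a(1) mM] hh_vbox[OF efQ a(2) nM] by simp
  qed
  have "(\<Sum>\<gamma>\<in>vbox (Suc d) (2*M). vf (Suc d) \<gamma> * (cmod (?c \<gamma>))\<^sup>2)
      = (\<Sum>\<gamma>\<in>?h ` ?K. vf (Suc d) \<gamma> * (cmod (?c \<gamma>))\<^sup>2)"
    by (rule sum.mono_neutral_right) (use sub c0 in auto)
  also have "\<dots> = (\<Sum>\<mu>\<in>?K. vf (Suc d) (?h \<mu>) * (cmod (?c (?h \<mu>)))\<^sup>2)"
    by (rule sum.reindex[OF inj, unfolded comp_def])
  also have "\<dots> = (\<Sum>\<mu>\<in>?K. vf (Suc d) (?h \<mu>) * (cmod (pl (P * Q) \<mu>))\<^sup>2)"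
    by (intro sum.cong refl) (simp add: c1)
  also have "\<dots> \<le> (\<Sum>\<mu>\<in>?K. fact ((m + n) div 2) * (real (mi_fact \<mu>) * (cmod (pl (P * Q) \<mu>))\<^sup>2))"
  proof (rule sum_mono)
    fix \<mu> assume mu: "\<mu> \<in> ?K"
    have "vf (Suc d) (?h \<mu>) = real (mi_fact \<mu>) * fact ((m + n - mi_deg \<mu>) div 2)"
      by (rule vf_hh[OF Kset_keys[OF efP efQ mu]])
    also have "\<dots> \<le> real (mi_fact \<mu>) * fact ((m + n) div 2)"
      by (intro mult_left_mono fact_mono div_le_mono) auto
    finally have vle: "vf (Suc d) (?h \<mu>) \<le> fact ((m + n) div 2) * real (mi_fact \<mu>)" by (simp only: mult.commute)
    show "vf (Suc d) (?h \<mu>) * (cmod (pl (P * Q) \<mu>))\<^sup>2 \<le> fact ((m + n) div 2) * (real (mi_fact \<mu>) * (cmod (pl (P * Q) \<mu>))\<^sup>2)"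
      using mult_right_mono[OF vle, of "(cmod (pl (P * Q) \<mu>))\<^sup>2"] by (simp only: mult.assoc zero_le_power2)
  qed
  also have "\<dots> = fact ((m + n) div 2) * (\<Sum>\<mu>\<in>pk (P * Q). real (mi_fact \<mu>) * (cmod (pl (P * Q) \<mu>))\<^sup>2)"
    unfolding sum_distrib_left[symmetric]
    by (rule arg_cong[where f="\<lambda>x. _ * x"], rule sum.mono_neutral_right) (auto simp: keys_mult_Kset in_keys_iff)
  also have "\<dots> = fact ((m + n) div 2) * Re (apolar_inner (P * Q) (P * Q))" by (simp add: apolar_self)
  finally show ?thesis .
qed

theorem theorem4p2:
  fixes d m n :: nat and P Q :: mpoly_c
  assumes "m > 0" "n > 0" "even m" "even n"
    and "P \<noteq> 0" "Q \<noteq> 0"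
    and "even_form d m P" "even_form d n Q"
  shows "real (fact ((m + n) div 2)) * apolar_norm (P * Q) \<ge> apolar_norm P * apolar_norm Q"
proof -
  define M where "M = max m n"
  have mM: "m \<le> M" and nM: "n \<le> M" by (auto simp: M_def)
  note efP = assms(7) and efQ = assms(8) and em = assms(3) and en = assms(4)
  let ?F = "Ff d m P" and ?G = "Ff d n Q"
  have sF: "x \<in> vbox (Suc d) M" if "?F x \<noteq> 0" for x
    using Ff_nz[OF that] hh_vbox[OF efP _ mM] by auto
  have sG: "x \<in> vbox (Suc d) M" if "?G x \<noteq> 0" for x
    using Ff_nz[OF that] hh_vbox[OF efQ _ nM] by auto
  have ac: "x = y" if "?F x \<noteq> 0" "?F y \<noteq> 0" "\<forall>i. x i \<le> y i" for x y
    by (rule Ff_antichain[OF efP em that])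
  define NP where "NP = Re (apolar_inner P P)"
  define NQ where "NQ = Re (apolar_inner Q Q)"
  define NR where "NR = Re (apolar_inner (P * Q) (P * Q))"
  define k where "k = (fact ((m + n) div 2) :: real)"
  have NP0: "NP \<ge> 0" unfolding NP_def apolar_self by (intro sum_nonneg) auto
  have NQ0: "NQ \<ge> 0" unfolding NQ_def apolar_self by (intro sum_nonneg) auto
  have NR0: "NR \<ge> 0" unfolding NR_def apolar_self by (intro sum_nonneg) auto
  have k1: "k \<ge> 1" unfolding k_def by (rule fact_ge_1)
  have NF: "NP \<le> (\<Sum>x\<in>vbox (Suc d) M. vf (Suc d) x * (cmod (?F x))\<^sup>2)"
    unfolding NP_def by (rule Ff_norm[OF efP mM])
  have NG: "NQ \<le> (\<Sum>x\<in>vbox (Suc d) M. vf (Suc d) x * (cmod (?G x))\<^sup>2)"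
    unfolding NQ_def by (rule Ff_norm[OF efQ nM])
  have "NP * NQ \<le> (\<Sum>x\<in>vbox (Suc d) M. vf (Suc d) x * (cmod (?F x))\<^sup>2) * (\<Sum>x\<in>vbox (Suc d) M. vf (Suc d) x * (cmod (?G x))\<^sup>2)"
    by (rule mult_mono[OF NF NG]) (use NQ0 in \<open>auto intro!: sum_nonneg simp: less_imp_le[OF vf_pos]\<close>)
  also have "\<dots> \<le> (\<Sum>\<gamma>\<in>vbox (Suc d) (2*M). vf (Suc d) \<gamma> * (cmod (conv (Suc d) M ?F ?G \<gamma>))\<^sup>2)"
    by (rule antichain_ineq[where f="?F" and g="?G", OF sF sG ac]) auto
  also have "\<dots> \<le> k * NR" unfolding k_def NR_def by (rule conv_norm[OF efP efQ em en mM nM])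
  also have "\<dots> \<le> k^2 * NR" using k1 NR0 by (intro mult_right_mono) (auto simp: power2_eq_square)
  finally have main: "NP * NQ \<le> k^2 * NR" .
  have "apolar_norm P * apolar_norm Q = sqrt (NP * NQ)"
    by (simp add: apolar_norm_def NP_def NQ_def real_sqrt_mult)
  also have "\<dots> \<le> sqrt (k^2 * NR)" using main by (rule real_sqrt_le_mono)
  also have "\<dots> = k * apolar_norm (P * Q)"
    using k1 by (simp add: real_sqrt_mult apolar_norm_def NR_def)
  finally show ?thesis unfolding k_def by simp
qed



end
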